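(* Let $G$ be a transitive permutation group on a finite set $\Omega$ of size $n\ge2$. For $g\in G$ let $c(g)$ be the number of cycles (including fixed points) in the disjoint cycle decomposition of $g$, let $\ell(g)$ be the length of the shortest cycle of odd length in that decomposition ($\ell(g)=0$ if there is none), and for $i\ge0$ let $\mathcal{O}_i$ be the set of $g\in G$ whose cycle decomposition contains at most $i$ cycles of odd length. Let $r(G)$ be the number of orbits of $G$ on the set $\binom{\Omega}{\lfloor n/2\rfloor}$ of $\lfloor n/2\rfloor$-subsets of $\Omega$, and for $A\subseteq\Omega$ let $G_A$ be its setwise stabiliser. Suppose $\mathbf{m}(G)=\lceil(n+1)/2\rceil$. If $n$ is even, then \[ r(G)|G|=\sum_{A\in\binom{\Omega}{n/2}}|G_A|=\sum_{g\in\mathcal{O}_0}2^{c(g)}, \] and if $n$ is odd, then \[ r(G)|G|=\sum_{A\in\binom{\Omega}{\lfloor n/2\rfloor}}|G_A|\le\sum_{g\in\mathcal{O}_1}2^{c(g)-1}\ell(g)\le\left\lceil\frac n2\right\rceil\sum_{A\in\binom{\Omega}{\lfloor n/2\rfloor}}|G_A|=\left\lceil\frac n2\right\rceil r(G)|G|. \]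
   Context: A subset $A\subseteq\Omega$ is self-separable for $G$ if there exists $g\in G$ with $A\cap A^g=\emptyset$; $\mathbf{m}(G)$ is the minimum cardinality of a subset of $\Omega$ that is not self-separable for $G$. *)

theory Defs
  imports "HOL-Combinatorics.Permutations"
begin

definition perm_group :: "('a \<Rightarrow> 'a) set \<Rightarrow> 'a set \<Rightarrow> bool" where
  "perm_group G \<Omega> \<longleftrightarrow> (\<forall>g\<in>G. g permutes \<Omega>) \<and> id \<in> G \<and>
     (\<forall>g\<in>G. \<forall>h\<in>G. g \<circ> h \<in> G) \<and> (\<forall>g\<in>G. inv g \<in> G)"

definition transitive_on :: "('a \<Rightarrow> 'a) set \<Rightarrow> 'a set \<Rightarrow> bool" where
  "transitive_on G \<Omega> \<longleftrightarrow> (\<forall>x\<in>\<Omega>. \<forall>y\<in>\<Omega>. \<exists>g\<in>G. g x = y)"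

definition self_separable :: "('a \<Rightarrow> 'a) set \<Rightarrow> 'a set \<Rightarrow> bool" where
  "self_separable G A \<longleftrightarrow> (\<exists>g\<in>G. A \<inter> g ` A = {})"

definition msep :: "('a \<Rightarrow> 'a) set \<Rightarrow> 'a set \<Rightarrow> nat" where
  "msep G \<Omega> = (LEAST k. \<exists>A. A \<subseteq> \<Omega> \<and> card A = k \<and> \<not> self_separable G A)"

definition cycle_of :: "('a \<Rightarrow> 'a) \<Rightarrow> 'a \<Rightarrow> 'a set" where
  "cycle_of g x = {(g ^^ k) x | k. True}"

definition cycles_on :: "'a set \<Rightarrow> ('a \<Rightarrow> 'a) \<Rightarrow> 'a set set" where
  "cycles_on \<Omega> g = cycle_of g ` \<Omega>"

definition ncycles :: "'a set \<Rightarrow> ('a \<Rightarrow> 'a) \<Rightarrow> nat" where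
  "ncycles \<Omega> g = card (cycles_on \<Omega> g)"

definition odd_cycles :: "'a set \<Rightarrow> ('a \<Rightarrow> 'a) \<Rightarrow> 'a set set" where
  "odd_cycles \<Omega> g = {C \<in> cycles_on \<Omega> g. odd (card C)}"

definition shortest_odd :: "'a set \<Rightarrow> ('a \<Rightarrow> 'a) \<Rightarrow> nat" where
  "shortest_odd \<Omega> g = (if odd_cycles \<Omega> g = {} then 0 else Min (card ` odd_cycles \<Omega> g))"

definition O_set :: "('a \<Rightarrow> 'a) set \<Rightarrow> 'a set \<Rightarrow> nat \<Rightarrow> ('a \<Rightarrow> 'a) set" where
  "O_set G \<Omega> i = {g \<in> G. card (odd_cycles \<Omega> g) \<le> i}"

definition ksubsets :: "'a set \<Rightarrow> nat \<Rightarrow> 'a set set" where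
  "ksubsets \<Omega> k = {A. A \<subseteq> \<Omega> \<and> card A = k}"

definition setwise_stab :: "('a \<Rightarrow> 'a) set \<Rightarrow> 'a set \<Rightarrow> ('a \<Rightarrow> 'a) set" where
  "setwise_stab G A = {g \<in> G. g ` A = A}"

definition rG :: "('a \<Rightarrow> 'a) set \<Rightarrow> 'a set \<Rightarrow> nat" where
  "rG G \<Omega> = card ((\<lambda>A. (\<lambda>g. g ` A) ` G) ` ksubsets \<Omega> (card \<Omega> div 2))"

end

theory Submission
  imports Defs "HOL-Combinatorics.Orbits"
begin

lemma cycle_of_orbit:
  assumes "g permutes \<Omega>" "finite \<Omega>"
  shows "cycle_of g y = orbit g y"
proof -
  have "permutation g" using assms permutation_permutes by blast
  thus ?thesis unfolding cycle_of_def using orbit_altdef_permutation by metis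
qed

lemma cyc_basic:
  fixes y
  assumes "g permutes \<Omega>" "finite \<Omega>"
  defines "m \<equiv> card (cycle_of g y)"
  shows "cycle_of g y = (\<lambda>n. (g^^n) y) ` {0..<m}"
    and "inj_on (\<lambda>n. (g^^n) y) {0..<m}"
    and "(g^^m) y = y"
    and "m > 0"
proof -
  have p: "permutation g" using assms permutation_permutes by blast
  have s: "y \<in> orbit g y" using permutation_self_in_orbit[OF p] .
  let ?p = "funpow_dist1 g y y"
  have e: "cycle_of g y = (\<lambda>n. (g^^n) y) ` {0..<?p}"
    using cycle_of_orbit[OF assms(1,2)] orbit_conv_funpow_dist1[OF s] by simp
  have i: "inj_on (\<lambda>n. (g^^n) y) {0..<?p}" using inj_on_funpow_dist1[OF s] .
  have "m = ?p" unfolding m_def e using card_image[OF i] by simp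
  thus "cycle_of g y = (\<lambda>n. (g^^n) y) ` {0..<m}" "inj_on (\<lambda>n. (g^^n) y) {0..<m}"
     "(g^^m) y = y" "m > 0"
    using e i funpow_dist1_prop[OF s] by auto
qed

lemma cyc_sub:
  assumes "g permutes \<Omega>" "finite \<Omega>" "y \<in> \<Omega>"
  shows "cycle_of g y \<subseteq> \<Omega>"
  using cycle_of_orbit[OF assms(1,2)] permutes_orbit_subset[OF assms(1,3)] by simp

lemma cyc_self: "y \<in> cycle_of g y"
  unfolding cycle_of_def by (auto intro: exI[of _ 0])

lemma cyc_finite:
  assumes "g permutes \<Omega>" "finite \<Omega>"
  shows "finite (cycle_of g y)"
  using cyc_basic(1)[OF assms] by (metis finite_atLeastLessThan finite_imageI)

lemma cyc_eq:
  assumes "g permutes \<Omega>" "finite \<Omega>" "z \<in> cycle_of g y"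
  shows "cycle_of g z = cycle_of g y"
proof -
  have p: "permutation g" using assms permutation_permutes by blast
  have "z \<in> orbit g y" using assms cycle_of_orbit by metis
  hence "cyclic_on g (orbit g y)" "z \<in> orbit g y" using cyclic_on_orbit'[OF p] by auto
  thus ?thesis using orbit_cyclic_eq3 cycle_of_orbit[OF assms(1,2)] by metis
qed

lemma cyc_disj:
  assumes "g permutes \<Omega>" "finite \<Omega>" "cycle_of g y \<noteq> cycle_of g z"
  shows "cycle_of g y \<inter> cycle_of g z = {}"
  using cyc_eq[OF assms(1,2)] assms(3) by blast

lemma cyc_image:
  assumes "g permutes \<Omega>" "finite \<Omega>"
  shows "g ` cycle_of g y = cycle_of g y"
proof -
  have p: "permutation g" using assms permutation_permutes by blast
  have "g ` orbit g y \<subseteq> orbit g y" using cyclic_on_inI[OF cyclic_on_orbit'[OF p]] by blast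
  moreover have "inj g" using assms permutes_inj by blast
  moreover have "finite (orbit g y)" using cyc_finite[OF assms] cycle_of_orbit[OF assms] by simp
  ultimately have "g ` orbit g y = orbit g y"
    by (metis card_image card_subset_eq inj_on_subset subset_UNIV)
  thus ?thesis using cycle_of_orbit[OF assms] by simp
qed

lemma cyc_in:
  assumes "g permutes \<Omega>" "finite \<Omega>" "x \<in> cycle_of g y"
  shows "g x \<in> cycle_of g y"
  using cyc_image[OF assms(1,2)] assms(3) by blast

definition alt :: "('a \<Rightarrow> 'a) \<Rightarrow> nat \<Rightarrow> 'a \<Rightarrow> 'a set" where
  "alt g m y = (\<lambda>i. (g^^i) y) ` {i. i < m \<and> odd i}"

lemma card_odd_less: "card {i::nat. i < m \<and> odd i} = m div 2"
proof (induction m)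
  case 0 then show ?case by simp
next
  case (Suc m)
  show ?case
  proof (cases "odd m")
    case True
    have "{i. i < Suc m \<and> odd i} = insert m {i. i < m \<and> odd i}" using True less_Suc_eq by auto
    then show ?thesis using Suc True by simp
  next
    case False
    have "{i. i < Suc m \<and> odd i} = {i. i < m \<and> odd i}" using False less_Suc_eq by auto
    then show ?thesis using Suc False by simp
  qed
qed

context
  fixes g :: "'a \<Rightarrow> 'a" and \<Omega> :: "'a set"
  assumes perm: "g permutes \<Omega>" and fin: "finite \<Omega>"
begin

lemma cyc_of_member:
  assumes "y \<in> cycle_of g x"
  shows "card (cycle_of g x) = card (cycle_of g y)" "cycle_of g y = cycle_of g x"
  using cyc_eq[OF perm fin assms] by auto

lemma pow_in: "(g^^i) y \<in> cycle_of g y"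
  unfolding cycle_of_def by blast

lemma pow_eq_iff:
  assumes "i < card (cycle_of g y)" "j < card (cycle_of g y)"
  shows "(g^^i) y = (g^^j) y \<longleftrightarrow> i = j"
  using cyc_basic(2)[OF perm fin, of y] assms unfolding inj_on_def by auto

lemma alt_sub: "alt g (card (cycle_of g y)) y \<subseteq> cycle_of g y"
  unfolding alt_def using pow_in by blast

lemma alt_card: "card (alt g (card (cycle_of g y)) y) = card (cycle_of g y) div 2"
proof -
  let ?m = "card (cycle_of g y)"
  have "inj_on (\<lambda>i. (g^^i) y) {i. i < ?m \<and> odd i}"
    using cyc_basic(2)[OF perm fin, of y] by (rule inj_on_subset) auto
  thus ?thesis unfolding alt_def using card_image card_odd_less by metis
qed

lemma alt_notin: "y \<notin> alt g (card (cycle_of g y)) y"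
proof
  let ?m = "card (cycle_of g y)"
  assume "y \<in> alt g ?m y"
  then obtain i where i: "i < ?m" "odd i" "(g^^i) y = y" unfolding alt_def by auto
  have "(g^^i) y = (g^^0) y" using i by simp
  hence "i = 0" using pow_eq_iff i(1) cyc_basic(4)[OF perm fin, of y] by blast
  thus False using i by simp
qed

lemma alt_disj: "alt g (card (cycle_of g y)) y \<inter> g ` alt g (card (cycle_of g y)) y = {}"
proof -
  let ?m = "card (cycle_of g y)"
  have m0: "?m > 0" using cyc_basic(4)[OF perm fin] .
  { fix i j assume i: "i < ?m" "odd i" and j: "j < ?m" "odd j" and e: "(g^^j) y = g ((g^^i) y)"
    have e2: "g ((g^^i) y) = (g^^(Suc i)) y" by simp
    have False
    proof (cases "Suc i < ?m")
      case True
      then have "j = Suc i" using pow_eq_iff j e e2 by metis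
      then show False using i j by simp
    next
      case False
      then have "Suc i = ?m" using i by simp
      then have "(g^^(Suc i)) y = (g^^0) y" using cyc_basic(3)[OF perm fin, of y] by simp
      then have "j = 0" using pow_eq_iff j e e2 m0 by metis
      then show False using j by simp
    qed }
  thus ?thesis unfolding alt_def by auto
qed

lemma upper:
  assumes "B \<subseteq> cycle_of g y" "B \<inter> g ` B = {}"
  shows "2 * card B \<le> card (cycle_of g y)"
proof -
  have f: "finite (cycle_of g y)" using cyc_finite[OF perm fin] .
  have "g ` B \<subseteq> cycle_of g y" using assms(1) cyc_in[OF perm fin] by blast
  hence "B \<union> g ` B \<subseteq> cycle_of g y" using assms by blast
  hence "card (B \<union> g ` B) \<le> card (cycle_of g y)" using f card_mono by blast
  moreover have "card (B \<union> g ` B) = card B + card (g ` B)"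
    using assms f by (meson card_Un_disjoint finite_imageI finite_subset)
  moreover have "card (g ` B) = card B" using permutes_inj[OF perm] by (simp add: card_image inj_on_subset)
  ultimately show ?thesis by simp
qed

lemma rest_card:
  assumes "B \<subseteq> cycle_of g y" "B \<inter> g ` B = {}" "card B = card (cycle_of g y) div 2"
  shows "card (cycle_of g y - B - g ` B) = card (cycle_of g y) mod 2"
proof -
  have f: "finite (cycle_of g y)" using cyc_finite[OF perm fin] .
  have "g ` B \<subseteq> cycle_of g y" using assms(1) cyc_in[OF perm fin] by blast
  hence s: "B \<union> g ` B \<subseteq> cycle_of g y" using assms by blast
  have "card (B \<union> g ` B) = card B + card (g ` B)"
    using assms f by (meson card_Un_disjoint finite_imageI finite_subset)
  moreover have "card (g ` B) = card B" using permutes_inj[OF perm] by (simp add: card_image inj_on_subset)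
  moreover have "cycle_of g y - B - g ` B = cycle_of g y - (B \<union> g ` B)" by blast
  ultimately show ?thesis using card_Diff_subset[OF finite_subset[OF s f] s] assms(3) by (simp; presburger)
qed

lemma alt_char:
  assumes "B \<subseteq> cycle_of g y" "y \<notin> B"
    and step: "\<And>i. Suc i < card (cycle_of g y) \<Longrightarrow> ((g^^(Suc i)) y \<in> B \<longleftrightarrow> (g^^i) y \<notin> B)"
  shows "B = alt g (card (cycle_of g y)) y"
proof -
  let ?m = "card (cycle_of g y)"
  have P: "i < ?m \<Longrightarrow> ((g^^i) y \<in> B \<longleftrightarrow> odd i)" for i
  proof (induction i)
    case 0 then show ?case using assms(2) by simp
  next
    case (Suc i) then show ?case using step[of i] by simp
  qed
  show ?thesis
  proof
    show "B \<subseteq> alt g ?m y"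
    proof
      fix b assume "b \<in> B"
      then have "b \<in> (\<lambda>n. (g^^n) y) ` {0..<?m}" using assms(1) cyc_basic(1)[OF perm fin, of y] by auto
      then obtain i where "i < ?m" "b = (g^^i) y" by auto
      then show "b \<in> alt g ?m y" unfolding alt_def using P \<open>b \<in> B\<close> by auto
    qed
  next
    show "alt g ?m y \<subseteq> B" unfolding alt_def using P by auto
  qed
qed

end

definition Mset :: "('a \<Rightarrow> 'a) \<Rightarrow> 'a set \<Rightarrow> 'a set set" where
  "Mset g C = {B. B \<subseteq> C \<and> B \<inter> g ` B = {} \<and> card B = card C div 2}"

context
  fixes g :: "'a \<Rightarrow> 'a" and \<Omega> :: "'a set"
  assumes perm: "g permutes \<Omega>" and fin: "finite \<Omega>"
begin

lemma alt_in_M: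
  assumes "y \<in> C" "C = cycle_of g x"
  shows "alt g (card C) y \<in> Mset g C"
proof -
  have C: "C = cycle_of g y" using assms cyc_of_member[OF perm fin] by metis
  show ?thesis unfolding Mset_def C using alt_sub[OF perm fin] alt_disj[OF perm fin] alt_card[OF perm fin] by blast
qed

lemma M_odd:
  assumes "C = cycle_of g x" "odd (card C)"
  shows "card (Mset g C) = card C"
proof -
  let ?m = "card C"
  have uniq: "C - B - g ` B = {y}" if "y \<in> C" "B = alt g ?m y" for y B
  proof -
    have C: "C = cycle_of g y" using assms that cyc_of_member[OF perm fin] by metis
    have BM: "B \<in> Mset g C" using alt_in_M[OF that(1) assms(1)] that by simp
    have "card (C - B - g ` B) = 1" using rest_card[OF perm fin] BM assms(2) unfolding Mset_def C
      by (simp add: odd_iff_mod_2_eq_one)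
    moreover have "y \<in> C - B - g ` B"
    proof -
      have "y \<notin> B" using alt_notin[OF perm fin] that C by simp
      moreover have "y \<notin> g ` B"
      proof
        assume "y \<in> g ` B"
        then obtain b where b: "b \<in> B" "y = g b" by blast
        have "b \<in> (\<lambda>i. (g^^i) y) ` {i. i < ?m \<and> odd i}" using b(1) that(2) unfolding alt_def by simp
        then obtain i where i: "i < ?m" "odd i" "b = (g^^i) y" by blast
        have i3: "y = g ((g^^i) y)" using b(2) i(3) by metis
        have "Suc i < ?m" using i assms(2) by (metis Suc_lessI even_Suc)
        moreover have "(g^^Suc i) y = g ((g^^i) y)" by simp
        with i3 have "(g^^Suc i) y = (g^^0) y" by (metis funpow_0)
        ultimately have "Suc i = 0" using pow_eq_iff[OF perm fin, of "Suc i" y 0] C by simp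
        thus False by simp
      qed
      ultimately show ?thesis using that by blast
    qed
    ultimately show ?thesis by (metis card_1_singletonE singletonD)
  qed
  have inj: "inj_on (\<lambda>y. alt g ?m y) C"
  proof (rule inj_onI)
    fix y z
    assume a: "y \<in> C" "z \<in> C" "alt g ?m y = alt g ?m z"
    have "{y} = C - alt g ?m y - g ` alt g ?m y" using uniq[OF a(1) refl] by (rule sym)
    also have "\<dots> = C - alt g ?m z - g ` alt g ?m z" by (simp only: a(3))
    also have "\<dots> = {z}" by (rule uniq[OF a(2) refl])
    finally have "{y} = {z}" .
    thus "y = z" by simp
  qed
  have "Mset g C = (\<lambda>y. alt g ?m y) ` C"
  proof
    show "(\<lambda>y. alt g ?m y) ` C \<subseteq> Mset g C" using alt_in_M[OF _ assms(1)] by blast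
  next
    show "Mset g C \<subseteq> (\<lambda>y. alt g ?m y) ` C"
    proof
      fix B assume BM: "B \<in> Mset g C"
      have "card (C - B - g ` B) = 1" using rest_card[OF perm fin] BM assms unfolding Mset_def
        by (simp add: odd_iff_mod_2_eq_one)
      then obtain y where y: "C - B - g ` B = {y}" by (meson card_1_singletonE)
      have yC: "y \<in> C" using y by blast
      have C: "C = cycle_of g y" using assms yC cyc_of_member[OF perm fin] by metis
      have B: "B \<subseteq> C" "B \<inter> g ` B = {}" using BM unfolding Mset_def by auto
      have "B = alt g ?m y" unfolding C
      proof (rule alt_char[OF perm fin])
        show "B \<subseteq> cycle_of g y" using B C by simp
        show "y \<notin> B" using y by blast
        fix i assume i: "Suc i < card (cycle_of g y)"
        have e: "(g^^Suc i) y = g ((g^^i) y)" by simp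
        show "((g^^(Suc i)) y \<in> B \<longleftrightarrow> (g^^i) y \<notin> B)"
        proof
          assume "(g^^(Suc i)) y \<in> B"
          thus "(g^^i) y \<notin> B" using B(2) e by blast
        next
          assume ni: "(g^^i) y \<notin> B"
          show "(g^^(Suc i)) y \<in> B"
          proof (rule ccontr)
            assume nb: "(g^^(Suc i)) y \<notin> B"
            have "(g^^(Suc i)) y \<noteq> y"
            proof
              assume "(g^^(Suc i)) y = y"
              hence "(g^^(Suc i)) y = (g^^0) y" by simp
              hence "Suc i = 0" using pow_eq_iff[OF perm fin, of "Suc i" y 0] i by simp
              thus False by simp
            qed
            moreover have "(g^^(Suc i)) y \<in> C" using C pow_in[OF perm fin] by metis
            ultimately have "(g^^(Suc i)) y \<in> g ` B" using y nb by blast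
            then obtain b where "b \<in> B" "g ((g^^i) y) = g b" using e by auto
            hence "b = (g^^i) y" using permutes_inj[OF perm] by (metis injD)
            thus False using ni \<open>b \<in> B\<close> by simp
          qed
        qed
      qed
      thus "B \<in> (\<lambda>y. alt g ?m y) ` C" using yC by blast
    qed
  qed
  thus ?thesis using card_image[OF inj] by simp
qed

lemma M_even:
  assumes "C = cycle_of g x" "even (card C)"
  shows "card (Mset g C) = 2"
proof -
  let ?m = "card C"
  have m0: "?m > 0" using cyc_basic(4)[OF perm fin] assms by simp
  have m2: "1 < ?m" using m0 assms(2) by (metis One_nat_def Suc_lessI odd_one)
  have any: "B = alt g ?m y" if BM: "B \<in> Mset g C" and yC: "y \<in> C" and yB: "y \<notin> B" for B y
  proof -
    have "card (C - B - g ` B) = 0" using rest_card[OF perm fin] BM assms unfolding Mset_def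
      by simp
    moreover have "finite C" using cyc_finite[OF perm fin] assms by simp
    ultimately have y: "C - B - g ` B = {}" by simp
    have C: "C = cycle_of g y" using assms yC cyc_of_member[OF perm fin] by metis
    have B: "B \<subseteq> C" "B \<inter> g ` B = {}" using BM unfolding Mset_def by auto
    show "B = alt g ?m y" unfolding C
    proof (rule alt_char[OF perm fin])
      show "B \<subseteq> cycle_of g y" using B C by simp
      show "y \<notin> B" using yB .
      fix i assume i: "Suc i < card (cycle_of g y)"
      have e: "(g^^Suc i) y = g ((g^^i) y)" by simp
      show "((g^^(Suc i)) y \<in> B \<longleftrightarrow> (g^^i) y \<notin> B)"
      proof
        assume "(g^^(Suc i)) y \<in> B"
        thus "(g^^i) y \<notin> B" using B(2) e by blast
      next
        assume ni: "(g^^i) y \<notin> B"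
        show "(g^^(Suc i)) y \<in> B"
        proof (rule ccontr)
          assume nb: "(g^^(Suc i)) y \<notin> B"
          have "(g^^(Suc i)) y \<in> C" using C pow_in[OF perm fin] by metis
          hence "(g^^(Suc i)) y \<in> g ` B" using y nb by blast
          then obtain b where "b \<in> B" "g ((g^^i) y) = g b" using e by auto
          hence "b = (g^^i) y" using permutes_inj[OF perm] by (metis injD)
          thus False using ni \<open>b \<in> B\<close> by simp
        qed
      qed
    qed
  qed
  have xC: "x \<in> C" using assms cyc_self by metis
  have gxC: "g x \<in> C" using assms cyc_in[OF perm fin] xC by metis
  have "Mset g C = {alt g ?m x, alt g ?m (g x)}"
  proof
    show "{alt g ?m x, alt g ?m (g x)} \<subseteq> Mset g C" using alt_in_M[OF _ assms(1)] xC gxC by blast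
  next
    show "Mset g C \<subseteq> {alt g ?m x, alt g ?m (g x)}"
    proof
      fix B assume BM: "B \<in> Mset g C"
      show "B \<in> {alt g ?m x, alt g ?m (g x)}"
      proof (cases "x \<in> B")
        case False thus ?thesis using any[OF BM xC] by simp
      next
        case True
        have "g x \<notin> B" using True BM unfolding Mset_def by blast
        thus ?thesis using any[OF BM gxC] by simp
      qed
    qed
  qed
  moreover have "alt g ?m x \<noteq> alt g ?m (g x)"
  proof -
    have "g x \<in> alt g ?m x" unfolding alt_def using m2 by (auto intro!: image_eqI[of _ _ 1])
    moreover have "g x \<notin> alt g ?m (g x)" using alt_notin[OF perm fin, of "g x"]
      cyc_of_member[OF perm fin] assms gxC by metis
    ultimately show ?thesis by blast
  qed
  ultimately show ?thesis by simp
qed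

end

definition Qset :: "('a \<Rightarrow> 'a) \<Rightarrow> 'a set \<Rightarrow> 'a set set" where
  "Qset g \<Omega> = {A. A \<subseteq> \<Omega> \<and> card A = card \<Omega> div 2 \<and> A \<inter> g ` A = {}}"

context
  fixes g :: "'a \<Rightarrow> 'a" and \<Omega> :: "'a set"
  assumes perm: "g permutes \<Omega>" and fin: "finite \<Omega>"
begin

lemma Cs_cases: "C \<in> cycles_on \<Omega> g \<Longrightarrow> \<exists>x\<in>\<Omega>. C = cycle_of g x"
  unfolding cycles_on_def by blast

lemma Cs_finite: "finite (cycles_on \<Omega> g)"
  unfolding cycles_on_def using fin by simp

lemma Cs_sub: "C \<in> cycles_on \<Omega> g \<Longrightarrow> C \<subseteq> \<Omega>"
  using Cs_cases cyc_sub[OF perm fin] by blast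

lemma Cs_fin: "C \<in> cycles_on \<Omega> g \<Longrightarrow> finite C"
  using Cs_sub fin finite_subset by blast

lemma Cs_Union: "\<Union>(cycles_on \<Omega> g) = \<Omega>"
proof
  show "\<Union>(cycles_on \<Omega> g) \<subseteq> \<Omega>" using Cs_sub by blast
  show "\<Omega> \<subseteq> \<Union>(cycles_on \<Omega> g)"
  proof
    fix x assume "x \<in> \<Omega>"
    hence "cycle_of g x \<in> cycles_on \<Omega> g" unfolding cycles_on_def by blast
    thus "x \<in> \<Union>(cycles_on \<Omega> g)" using cyc_self[of x g] by blast
  qed
qed

lemma Cs_disj: "C \<in> cycles_on \<Omega> g \<Longrightarrow> C' \<in> cycles_on \<Omega> g \<Longrightarrow> C \<noteq> C' \<Longrightarrow> C \<inter> C' = {}"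
proof -
  assume a: "C \<in> cycles_on \<Omega> g" "C' \<in> cycles_on \<Omega> g" "C \<noteq> C'"
  obtain x where x: "C = cycle_of g x" using Cs_cases a(1) by blast
  obtain y where y: "C' = cycle_of g y" using Cs_cases a(2) by blast
  show ?thesis using cyc_disj[OF perm fin, of x y] a(3) x y by simp
qed

lemma Cs_in: "C \<in> cycles_on \<Omega> g \<Longrightarrow> x \<in> C \<Longrightarrow> g x \<in> C"
proof -
  assume a: "C \<in> cycles_on \<Omega> g" "x \<in> C"
  obtain y where y: "C = cycle_of g y" using Cs_cases a(1) by blast
  show ?thesis using cyc_in[OF perm fin, of x y] a(2) y by simp
qed

lemma sum_card_Cs: "(\<Sum>C\<in>cycles_on \<Omega> g. card C) = card \<Omega>"
proof -
  have "card (\<Union>(cycles_on \<Omega> g)) = (\<Sum>C\<in>cycles_on \<Omega> g. card C)"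
    by (rule card_Union_disjoint) (auto simp: pairwise_def disjnt_def dest: Cs_disj intro: Cs_fin)
  thus ?thesis using Cs_Union by simp
qed

lemma sum_mod_Cs: "(\<Sum>C\<in>cycles_on \<Omega> g. card C mod 2) = card (odd_cycles \<Omega> g)"
proof -
  have "(\<Sum>C\<in>cycles_on \<Omega> g. card C mod 2) = (\<Sum>C\<in>cycles_on \<Omega> g. if odd (card C) then 1 else 0)"
    by (rule sum.cong) (auto simp: odd_iff_mod_2_eq_one)
  also have "\<dots> = card {C \<in> cycles_on \<Omega> g. odd (card C)}"
    using Cs_finite by (simp add: sum.If_cases Int_def)
  finally show ?thesis unfolding odd_cycles_def .
qed

lemma two_D: "2 * (\<Sum>C\<in>cycles_on \<Omega> g. card C div 2) + card (odd_cycles \<Omega> g) = card \<Omega>"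
proof -
  have "2 * (\<Sum>C\<in>cycles_on \<Omega> g. card C div 2) + (\<Sum>C\<in>cycles_on \<Omega> g. card C mod 2)
        = (\<Sum>C\<in>cycles_on \<Omega> g. 2 * (card C div 2) + card C mod 2)"
    by (simp only: sum_distrib_left sum.distrib)
  also have "\<dots> = (\<Sum>C\<in>cycles_on \<Omega> g. card C)" by (rule sum.cong) auto
  finally show ?thesis using sum_card_Cs sum_mod_Cs by simp
qed

lemma card_split:
  assumes "A \<subseteq> \<Omega>"
  shows "card A = (\<Sum>C\<in>cycles_on \<Omega> g. card (A \<inter> C))"
proof -
  have "A = (\<Union>C\<in>cycles_on \<Omega> g. A \<inter> C)" using Cs_Union assms by blast
  moreover have "card (\<Union>C\<in>cycles_on \<Omega> g. A \<inter> C) = (\<Sum>C\<in>cycles_on \<Omega> g. card (A \<inter> C))"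
    by (rule card_UN_disjoint) (auto simp: Cs_finite Cs_fin dest: Cs_disj)
  ultimately show ?thesis by simp
qed

lemma part_upper:
  assumes "A \<inter> g ` A = {}" "C \<in> cycles_on \<Omega> g"
  shows "card (A \<inter> C) \<le> card C div 2"
proof -
  obtain x where C: "C = cycle_of g x" using Cs_cases assms(2) by blast
  have "(A \<inter> C) \<inter> g ` (A \<inter> C) = {}" using assms(1) by blast
  hence "2 * card (A \<inter> C) \<le> card C" using upper[OF perm fin, of "A \<inter> C" x] C by auto
  thus ?thesis by linarith
qed


lemma Q_empty:
  assumes "card (odd_cycles \<Omega> g) \<noteq> card \<Omega> mod 2"
  shows "Qset g \<Omega> = {}"
proof (rule ccontr)
  assume "Qset g \<Omega> \<noteq> {}"
  then obtain A where A: "A \<subseteq> \<Omega>" "card A = card \<Omega> div 2" "A \<inter> g ` A = {}" unfolding Qset_def by auto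
  have "card A \<le> (\<Sum>C\<in>cycles_on \<Omega> g. card C div 2)"
    unfolding card_split[OF A(1)] by (rule sum_mono) (rule part_upper[OF A(3)])
  thus False using two_D assms A(2) by presburger
qed

lemma Q_card:
  assumes "card (odd_cycles \<Omega> g) = card \<Omega> mod 2"
  shows "card (Qset g \<Omega>) = (\<Prod>C\<in>cycles_on \<Omega> g. card (Mset g C))"
proof -
  let ?Cs = "cycles_on \<Omega> g"
  let ?U = "\<lambda>f. \<Union>C\<in>?Cs. f C"
  have D: "(\<Sum>C\<in>?Cs. card C div 2) = card \<Omega> div 2" using two_D assms by presburger
  have Msub: "f C \<subseteq> C" if "f \<in> PiE ?Cs (Mset g)" "C \<in> ?Cs" for f C
    using that unfolding Mset_def by auto
  have Uint: "?U f \<inter> C = f C" if "f \<in> PiE ?Cs (Mset g)" "C \<in> ?Cs" for f C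
  proof
    show "?U f \<inter> C \<subseteq> f C"
    proof
      fix z assume "z \<in> ?U f \<inter> C"
      then obtain C' where "C' \<in> ?Cs" "z \<in> f C'" "z \<in> C" by blast
      moreover have "f C' \<subseteq> C'" using Msub that(1) \<open>C' \<in> ?Cs\<close> by blast
      ultimately have "C' = C" using Cs_disj that(2) by blast
      thus "z \<in> f C" using \<open>z \<in> f C'\<close> by simp
    qed
    show "f C \<subseteq> ?U f \<inter> C" using Msub[OF that] that(2) by blast
  qed
  have inj: "inj_on ?U (PiE ?Cs (Mset g))"
  proof (rule inj_onI)
    fix f f' assume f: "f \<in> PiE ?Cs (Mset g)" and f': "f' \<in> PiE ?Cs (Mset g)" and e: "?U f = ?U f'"
    show "f = f'"
    proof (rule PiE_ext[OF f f'])
      fix C assume "C \<in> ?Cs"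
      thus "f C = f' C" using Uint[OF f] Uint[OF f'] e by metis
    qed
  qed
  have "Qset g \<Omega> = ?U ` PiE ?Cs (Mset g)"
  proof
    show "?U ` PiE ?Cs (Mset g) \<subseteq> Qset g \<Omega>"
    proof
      fix A assume "A \<in> ?U ` PiE ?Cs (Mset g)"
      then obtain f where f: "f \<in> PiE ?Cs (Mset g)" and A: "A = ?U f" by blast
      have "A \<subseteq> \<Omega>" using A Msub[OF f] Cs_sub by blast
      moreover have "card A = card \<Omega> div 2"
      proof -
        have fdisj: "\<forall>C\<in>?Cs. \<forall>C'\<in>?Cs. C \<noteq> C' \<longrightarrow> f C \<inter> f C' = {}"
        proof (intro ballI impI)
          fix C C' assume "C \<in> ?Cs" "C' \<in> ?Cs" "C \<noteq> C'"
          thus "f C \<inter> f C' = {}" using Msub[OF f] Cs_disj by blast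
        qed
        have ffin: "\<forall>C\<in>?Cs. finite (f C)" using Msub[OF f] Cs_fin finite_subset by blast
        have "card A = (\<Sum>C\<in>?Cs. card (f C))" unfolding A
          by (rule card_UN_disjoint[OF Cs_finite ffin fdisj])
        also have "\<dots> = (\<Sum>C\<in>?Cs. card C div 2)"
          by (rule sum.cong) (use f in \<open>auto simp: Mset_def\<close>)
        finally show ?thesis using D by simp
      qed
      moreover have "A \<inter> g ` A = {}"
      proof (rule ccontr)
        assume "A \<inter> g ` A \<noteq> {}"
        then obtain z C C' where zC: "C \<in> ?Cs" "C' \<in> ?Cs" "g z \<in> f C" "z \<in> f C'" using A by blast
        have "g z \<in> C'" using Cs_in[OF zC(2)] Msub[OF f zC(2)] zC(4) by blast
        moreover have "g z \<in> C" using Msub[OF f zC(1)] zC(3) by blast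
        ultimately have "C = C'" using Cs_disj[OF zC(1,2)] by blast
        hence "g z \<in> f C \<inter> g ` f C" using zC(3,4) by blast
        moreover have "f C \<inter> g ` f C = {}" using f zC(1) unfolding Mset_def by auto
        ultimately show False by blast
      qed
      ultimately show "A \<in> Qset g \<Omega>" unfolding Qset_def by blast
    qed
  next
    show "Qset g \<Omega> \<subseteq> ?U ` PiE ?Cs (Mset g)"
    proof
      fix A assume "A \<in> Qset g \<Omega>"
      hence A: "A \<subseteq> \<Omega>" "card A = card \<Omega> div 2" "A \<inter> g ` A = {}" unfolding Qset_def by auto
      have le: "\<forall>C\<in>?Cs. card (A \<inter> C) \<le> card C div 2" using part_upper[OF A(3)] by blast
      have eq: "card (A \<inter> C) = card C div 2" if "C \<in> ?Cs" for C
      proof (rule ccontr)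
        assume "card (A \<inter> C) \<noteq> card C div 2"
        hence "card (A \<inter> C) < card C div 2" using le that by force
        hence "(\<Sum>C\<in>?Cs. card (A \<inter> C)) < (\<Sum>C\<in>?Cs. card C div 2)"
          using sum_strict_mono_ex1[OF Cs_finite le] that by blast
        thus False using card_split[OF A(1)] A(2) D by simp
      qed
      let ?f = "restrict (\<lambda>C. A \<inter> C) ?Cs"
      have "?f \<in> PiE ?Cs (Mset g)"
        using eq A(3) unfolding Mset_def by auto
      moreover have "?U ?f = A" using Cs_Union A(1) by auto
      ultimately show "A \<in> ?U ` PiE ?Cs (Mset g)" by (metis image_eqI)
    qed
  qed
  hence "card (Qset g \<Omega>) = card (PiE ?Cs (Mset g))" using card_image[OF inj] by simp
  thus ?thesis using card_PiE[OF Cs_finite] by simp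
qed

lemma Mset_card: "C \<in> cycles_on \<Omega> g \<Longrightarrow> card (Mset g C) = (if even (card C) then 2 else card C)"
proof -
  assume a: "C \<in> cycles_on \<Omega> g"
  obtain y where y: "C = cycle_of g y" using Cs_cases a(1) by blast
  show ?thesis
  proof (cases "even (card C)")
    case True thus ?thesis using M_even[OF perm fin y] by simp
  next
    case False thus ?thesis using M_odd[OF perm fin y] by simp
  qed
qed

end

context
  fixes G :: "('a \<Rightarrow> 'a) set" and \<Omega> :: "'a set"
  assumes pg: "perm_group G \<Omega>" and fin: "finite \<Omega>"
begin

lemma G_perm: "g \<in> G \<Longrightarrow> g permutes \<Omega>"
  using pg unfolding perm_group_def by blast

lemma G_id: "id \<in> G"
  using pg unfolding perm_group_def by blast

lemma G_comp: "g \<in> G \<Longrightarrow> h \<in> G \<Longrightarrow> g \<circ> h \<in> G"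
  using pg unfolding perm_group_def by blast

lemma G_inv: "g \<in> G \<Longrightarrow> inv g \<in> G"
  using pg unfolding perm_group_def by blast

lemma G_finite: "finite G"
proof -
  have "G \<subseteq> {p. p permutes \<Omega>}" using G_perm by blast
  thus ?thesis using finite_permutations[OF fin] finite_subset by blast
qed

lemma G_card_img: "g \<in> G \<Longrightarrow> card (g ` A) = card A"
proof -
  assume "g \<in> G"
  hence "inj g" using permutes_inj[OF G_perm] by blast
  thus ?thesis using card_image[OF inj_on_subset[OF _ subset_UNIV]] by blast
qed

lemma G_img_sub: "g \<in> G \<Longrightarrow> A \<subseteq> \<Omega> \<Longrightarrow> g ` A \<subseteq> \<Omega>"
  using permutes_image[OF G_perm] by blast

lemma coset_card:
  assumes g0: "g0 \<in> G"
  shows "card {g \<in> G. g ` A = g0 ` A} = card (setwise_stab G A)"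
proof -
  have ig: "inj g0" using permutes_inj[OF G_perm[OF g0]] .
  have io1: "inv g0 \<circ> g0 = id" by (rule permutes_inv_o(2)[OF G_perm[OF g0]])
  have io2: "g0 \<circ> inv g0 = id" by (rule permutes_inv_o(1)[OF G_perm[OF g0]])
  note io = io1 io2
  have inj: "inj_on (\<lambda>h. g0 \<circ> h) (setwise_stab G A)"
  proof (rule inj_onI)
    fix h h' assume "g0 \<circ> h = g0 \<circ> h'"
    hence "inv g0 \<circ> (g0 \<circ> h) = inv g0 \<circ> (g0 \<circ> h')" by simp
    thus "h = h'" by (simp only: comp_assoc[symmetric] io(1) id_comp)
  qed
  have "(\<lambda>h. g0 \<circ> h) ` (setwise_stab G A) = {g \<in> G. g ` A = g0 ` A}"
  proof
    show "(\<lambda>h. g0 \<circ> h) ` setwise_stab G A \<subseteq> {g \<in> G. g ` A = g0 ` A}"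
    proof
      fix g assume "g \<in> (\<lambda>h. g0 \<circ> h) ` setwise_stab G A"
      then obtain h where h: "h \<in> G" "h ` A = A" "g = g0 \<circ> h" unfolding setwise_stab_def by blast
      have "g ` A = g0 ` (h ` A)" unfolding h(3) by (rule image_comp[symmetric])
      thus "g \<in> {g \<in> G. g ` A = g0 ` A}" using h G_comp[OF g0 h(1)] by simp
    qed
  next
    show "{g \<in> G. g ` A = g0 ` A} \<subseteq> (\<lambda>h. g0 \<circ> h) ` setwise_stab G A"
    proof
      fix g assume g: "g \<in> {g \<in> G. g ` A = g0 ` A}"
      let ?h = "inv g0 \<circ> g"
      have "?h \<in> G" using G_comp[OF G_inv[OF g0]] g by blast
      moreover have "?h ` A = A"
      proof -
        have "?h ` A = inv g0 ` (g ` A)" by (rule image_comp[symmetric])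
        also have "\<dots> = inv g0 ` (g0 ` A)" using g by simp
        also have "\<dots> = (inv g0 \<circ> g0) ` A" by (rule image_comp)
        finally show ?thesis using io by simp
      qed
      moreover have "g0 \<circ> ?h = g" by (simp only: comp_assoc[symmetric] io(2) id_comp)
      ultimately have "?h \<in> setwise_stab G A" "g = g0 \<circ> ?h" unfolding setwise_stab_def by auto
      thus "g \<in> (\<lambda>h. g0 \<circ> h) ` setwise_stab G A" by (intro image_eqI)
    qed
  qed
  moreover have "card ((\<lambda>h. g0 \<circ> h) ` (setwise_stab G A)) = card (setwise_stab G A)"
    by (rule card_image[OF inj])
  ultimately show ?thesis by (rule subst)
qed

lemma coset_le: "card {g \<in> G. g ` A = B} \<le> card (setwise_stab G A)"
proof (cases "\<exists>g0\<in>G. g0 ` A = B")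
  case True
  then obtain g0 where g0: "g0 \<in> G" "g0 ` A = B" by blast
  have "card {g \<in> G. g ` A = B} = card {g \<in> G. g ` A = g0 ` A}" using g0(2) by simp
  also have "\<dots> = card (setwise_stab G A)" by (rule coset_card[OF g0(1)])
  finally show ?thesis by simp
next
  case False
  have "{g \<in> G. g ` A = B} = {}" using False by blast
  hence "card {g \<in> G. g ` A = B} = 0" by (simp only: card.empty)
  thus ?thesis by (simp only: le0)
qed

definition orb where "orb A = (\<lambda>g. g ` A) ` G"

lemma orb_self: "A \<in> orb A"
  unfolding orb_def using G_id by (metis id_apply image_eqI image_id)

lemma orb_finite: "finite (orb A)"
  unfolding orb_def using G_finite by simp

lemma orb_K: "A \<in> ksubsets \<Omega> k \<Longrightarrow> B \<in> orb A \<Longrightarrow> B \<in> ksubsets \<Omega> k"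
proof -
  assume a: "A \<in> ksubsets \<Omega> k" "B \<in> orb A"
  obtain g where g: "g \<in> G" "B = g ` A" using a(2) unfolding orb_def by blast
  have "A \<subseteq> \<Omega>" "card A = k" using a(1) unfolding ksubsets_def by auto
  hence "B \<subseteq> \<Omega>" "card B = k" using G_card_img[OF g(1)] G_img_sub[OF g(1)] g(2) by auto
  thus ?thesis unfolding ksubsets_def by blast
qed

lemma orb_eq:
  assumes "B \<in> orb A" shows "orb B = orb A"
proof -
  obtain h where h: "h \<in> G" "B = h ` A" using assms unfolding orb_def by blast
  have io: "inv h \<circ> h = id" using permutes_inv_o[OF G_perm[OF h(1)]] by auto
  show ?thesis
  proof
    show "orb B \<subseteq> orb A"
    proof
      fix C assume "C \<in> orb B"
      then obtain g where "g \<in> G" "C = g ` B" unfolding orb_def by blast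
      hence "C = (g \<circ> h) ` A" "g \<circ> h \<in> G" using h G_comp by (auto simp: image_comp)
      thus "C \<in> orb A" unfolding orb_def by blast
    qed
    show "orb A \<subseteq> orb B"
    proof
      fix C assume "C \<in> orb A"
      then obtain g where g: "g \<in> G" "C = g ` A" unfolding orb_def by blast
      have "(g \<circ> inv h) ` B = g ` ((inv h \<circ> h) ` A)" using h by (simp add: image_comp)
      hence "C = (g \<circ> inv h) ` B" using io g by simp
      moreover have "g \<circ> inv h \<in> G" using G_comp[OF g(1) G_inv[OF h(1)]] .
      ultimately show "C \<in> orb B" unfolding orb_def by blast
    qed
  qed
qed

lemma orbit_stab: "card (orb A) * card (setwise_stab G A) = card G"
proof -
  have "card G = (\<Sum>g\<in>G. 1)" by simp
  also have "\<dots> = (\<Sum>B\<in>orb A. \<Sum>g\<in>{g \<in> G. g ` A = B}. 1)"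
    unfolding orb_def by (rule sum.image_gen[OF G_finite])
  also have "\<dots> = (\<Sum>B\<in>orb A. card (setwise_stab G A))"
  proof (rule sum.cong[OF refl])
    fix B assume "B \<in> orb A"
    then obtain g0 where "g0 \<in> G" "B = g0 ` A" unfolding orb_def by blast
    thus "(\<Sum>g\<in>{g \<in> G. g ` A = B}. 1) = card (setwise_stab G A)" using coset_card by simp
  qed
  finally show ?thesis by simp
qed

lemma orbit_count:
  "rG G \<Omega> * card G = (\<Sum>A\<in>ksubsets \<Omega> (card \<Omega> div 2). card (setwise_stab G A))"
proof -
  let ?K = "ksubsets \<Omega> (card \<Omega> div 2)"
  have Kfin: "finite ?K" unfolding ksubsets_def using fin by simp
  have rg: "rG G \<Omega> = card (orb ` ?K)" unfolding rG_def orb_def by simp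
  have "(\<Sum>A\<in>?K. card (setwise_stab G A)) = (\<Sum>Ob\<in>orb ` ?K. \<Sum>A\<in>{A \<in> ?K. orb A = Ob}. card (setwise_stab G A))"
    by (rule sum.image_gen[OF Kfin])
  also have "\<dots> = (\<Sum>Ob\<in>orb ` ?K. card G)"
  proof (rule sum.cong[OF refl])
    fix Ob assume "Ob \<in> orb ` ?K"
    then obtain A0 where A0: "A0 \<in> ?K" "Ob = orb A0" by blast
    have set: "{A \<in> ?K. orb A = Ob} = Ob"
      using A0 orb_K[OF A0(1)] orb_eq orb_self by blast
    have pos: "card Ob > 0" using A0 orb_self orb_finite card_gt_0_iff by blast
    have "(\<Sum>A\<in>Ob. card (setwise_stab G A)) = (\<Sum>A\<in>Ob. card G div card Ob)"
    proof (rule sum.cong[OF refl])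
      fix A assume "A \<in> Ob"
      hence "orb A = Ob" using A0 orb_eq by blast
      thus "card (setwise_stab G A) = card G div card Ob" using orbit_stab[of A] pos
        by (metis nonzero_mult_div_cancel_left not_gr0)
    qed
    also have "\<dots> = card Ob * (card G div card Ob)" by simp
    also have "\<dots> = card G" using orbit_stab[of A0] A0(2) by (metis dvd_mult_div_cancel dvd_triv_left)
    finally show "(\<Sum>A\<in>{A \<in> ?K. orb A = Ob}. card (setwise_stab G A)) = card G" using set by simp
  qed
  also have "\<dots> = card (orb ` ?K) * card G" by simp
  finally show ?thesis using rg by simp
qed

end

lemma double_count:
  assumes "finite K" "finite G"
  shows "(\<Sum>A\<in>K. card {g \<in> G. R A g}) = (\<Sum>g\<in>G. card {A \<in> K. R A g})"
proof -
  have "(\<Sum>A\<in>K. card {g \<in> G. R A g}) = (\<Sum>A\<in>K. \<Sum>g\<in>{g. g \<in> G \<and> R A g}. (1::nat))" by simp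
  also have "\<dots> = (\<Sum>g\<in>G. \<Sum>A\<in>{A. A \<in> K \<and> R A g}. (1::nat))"
    by (rule sum.swap_restrict[OF assms])
  also have "\<dots> = (\<Sum>g\<in>G. card {A \<in> K. R A g})" by simp
  finally show ?thesis .
qed

lemma Q_eq: "{A \<in> ksubsets \<Omega> (card \<Omega> div 2). A \<inter> g ` A = {}} = Qset g \<Omega>"
  unfolding ksubsets_def Qset_def by auto

lemma Q_even:
  assumes perm: "g permutes \<Omega>" and fin: "finite \<Omega>" and ev: "even (card \<Omega>)"
  shows "card (Qset g \<Omega>) = (if card (odd_cycles \<Omega> g) \<le> 0 then 2 ^ ncycles \<Omega> g else 0)"
proof (cases "card (odd_cycles \<Omega> g) = 0")
  case True
  have fo: "finite (odd_cycles \<Omega> g)" unfolding odd_cycles_def using Cs_finite[OF perm fin] by simp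
  hence oe: "odd_cycles \<Omega> g = {}" using True by simp
  have "card (Qset g \<Omega>) = (\<Prod>C\<in>cycles_on \<Omega> g. card (Mset g C))"
    using Q_card[OF perm fin] True ev by simp
  also have "\<dots> = (\<Prod>C\<in>cycles_on \<Omega> g. 2)"
  proof (rule prod.cong[OF refl])
    fix C assume C: "C \<in> cycles_on \<Omega> g"
    hence "even (card C)" using oe unfolding odd_cycles_def by blast
    thus "card (Mset g C) = 2" using Mset_card[OF perm fin C] by simp
  qed
  also have "\<dots> = 2 ^ ncycles \<Omega> g" unfolding ncycles_def by simp
  finally show ?thesis using True by simp
next
  case False
  hence "Qset g \<Omega> = {}" using Q_empty[OF perm fin] ev by simp
  thus ?thesis using False by simp
qed

lemma Q_odd:
  assumes perm: "g permutes \<Omega>" and fin: "finite \<Omega>" and od: "odd (card \<Omega>)"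
  shows "card (Qset g \<Omega>) = (if card (odd_cycles \<Omega> g) \<le> 1 then 2 ^ (ncycles \<Omega> g - 1) * shortest_odd \<Omega> g else 0)"
proof (cases "card (odd_cycles \<Omega> g) = 1")
  case True
  then obtain C0 where C0: "odd_cycles \<Omega> g = {C0}" by (meson card_1_singletonE)
  have C0c: "C0 \<in> cycles_on \<Omega> g" "odd (card C0)" using C0 unfolding odd_cycles_def by auto
  have sh: "shortest_odd \<Omega> g = card C0" unfolding shortest_odd_def C0 by simp
  have "card (Qset g \<Omega>) = (\<Prod>C\<in>cycles_on \<Omega> g. card (Mset g C))"
    using Q_card[OF perm fin] True od by (simp add: odd_iff_mod_2_eq_one)
  also have "\<dots> = card (Mset g C0) * (\<Prod>C\<in>cycles_on \<Omega> g - {C0}. card (Mset g C))"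
    by (rule prod.remove[OF Cs_finite[OF perm fin] C0c(1)])
  also have "(\<Prod>C\<in>cycles_on \<Omega> g - {C0}. card (Mset g C)) = (\<Prod>C\<in>cycles_on \<Omega> g - {C0}. 2)"
  proof (rule prod.cong[OF refl])
    fix C assume C: "C \<in> cycles_on \<Omega> g - {C0}"
    hence "even (card C)" using C0 unfolding odd_cycles_def by blast
    thus "card (Mset g C) = 2" using Mset_card[OF perm fin] C by simp
  qed
  also have "(\<Prod>C\<in>cycles_on \<Omega> g - {C0}. (2::nat)) = 2 ^ (ncycles \<Omega> g - 1)"
    unfolding ncycles_def using C0c(1) Cs_finite[OF perm fin] by (simp add: card_Diff_singleton)
  also have "card (Mset g C0) = card C0" using Mset_card[OF perm fin C0c(1)] C0c(2) by simp
  finally show ?thesis using sh True by simp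
next
  case False
  hence "Qset g \<Omega> = {}" using Q_empty[OF perm fin] od by (simp add: odd_iff_mod_2_eq_one)
  moreover have "card (odd_cycles \<Omega> g) = 0 \<Longrightarrow> shortest_odd \<Omega> g = 0"
  proof -
    assume "card (odd_cycles \<Omega> g) = 0"
    moreover have "finite (odd_cycles \<Omega> g)" unfolding odd_cycles_def using Cs_finite[OF perm fin] by simp
    ultimately have "odd_cycles \<Omega> g = {}" by simp
    thus ?thesis unfolding shortest_odd_def by simp
  qed
  ultimately show ?thesis using False by auto
qed

context
  fixes G :: "('a \<Rightarrow> 'a) set" and \<Omega> :: "'a set"
  assumes pg: "perm_group G \<Omega>" and fin: "finite \<Omega>"
    and ms: "msep G \<Omega> = (card \<Omega> + 2) div 2"
begin

lemma sep_all:
  assumes A: "A \<in> ksubsets \<Omega> (card \<Omega> div 2)"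
  shows "\<exists>g\<in>G. A \<inter> g ` A = {}"
proof (rule ccontr)
  assume "\<not> (\<exists>g\<in>G. A \<inter> g ` A = {})"
  hence ns: "\<not> self_separable G A" unfolding self_separable_def by blast
  have "A \<subseteq> \<Omega>" "card A = card \<Omega> div 2" using A unfolding ksubsets_def by auto
  hence "\<exists>B. B \<subseteq> \<Omega> \<and> card B = card \<Omega> div 2 \<and> \<not> self_separable G B" using ns by blast
  hence "msep G \<Omega> \<le> card \<Omega> div 2" unfolding msep_def by (rule Least_le)
  thus False using ms by simp
qed

lemma P_lower:
  assumes A: "A \<in> ksubsets \<Omega> (card \<Omega> div 2)"
  shows "card (setwise_stab G A) \<le> card {g \<in> G. A \<inter> g ` A = {}}"
proof -
  obtain g0 where g0: "g0 \<in> G" "A \<inter> g0 ` A = {}" using sep_all[OF A] by blast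
  have "{g \<in> G. g ` A = g0 ` A} \<subseteq> {g \<in> G. A \<inter> g ` A = {}}" using g0(2) by auto
  hence "card {g \<in> G. g ` A = g0 ` A} \<le> card {g \<in> G. A \<inter> g ` A = {}}"
    by (rule card_mono[rotated]) (use G_finite[OF pg fin] in simp)
  thus ?thesis using coset_card[OF pg fin g0(1)] by simp
qed

lemma P_upper:
  assumes A: "A \<in> ksubsets \<Omega> (card \<Omega> div 2)"
  shows "card {g \<in> G. A \<inter> g ` A = {}} \<le> ((card \<Omega> - card \<Omega> div 2) choose (card \<Omega> div 2)) * card (setwise_stab G A)"
proof -
  let ?k = "card \<Omega> div 2"
  let ?Bs = "ksubsets (\<Omega> - A) ?k"
  have A1: "A \<subseteq> \<Omega>" "card A = ?k" using A unfolding ksubsets_def by auto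
  have Bfin: "finite ?Bs" unfolding ksubsets_def using fin by simp
  have "{g \<in> G. A \<inter> g ` A = {}} \<subseteq> (\<Union>B\<in>?Bs. {g \<in> G. g ` A = B})"
  proof
    fix g assume g: "g \<in> {g \<in> G. A \<inter> g ` A = {}}"
    hence "g ` A \<in> ?Bs" unfolding ksubsets_def
      using G_img_sub[OF pg fin _ A1(1)] G_card_img[OF pg fin] A1(2) by auto
    thus "g \<in> (\<Union>B\<in>?Bs. {g \<in> G. g ` A = B})" using g by blast
  qed
  hence "card {g \<in> G. A \<inter> g ` A = {}} \<le> card (\<Union>B\<in>?Bs. {g \<in> G. g ` A = B})"
    by (rule card_mono[rotated]) (use Bfin G_finite[OF pg fin] in auto)
  also have "\<dots> \<le> (\<Sum>B\<in>?Bs. card {g \<in> G. g ` A = B})" by (rule card_UN_le[OF Bfin])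
  also have "\<dots> \<le> (\<Sum>B\<in>?Bs. card (setwise_stab G A))"
    by (rule sum_mono) (rule coset_le[OF pg fin])
  also have "\<dots> = card ?Bs * card (setwise_stab G A)" by simp
  also have "card ?Bs = card (\<Omega> - A) choose ?k" unfolding ksubsets_def
    by (rule n_subsets) (use fin in simp)
  also have "card (\<Omega> - A) = card \<Omega> - ?k" using A1 fin by (simp add: card_Diff_subset finite_subset)
  finally show ?thesis .
qed

end

theorem lemma7p3:
  fixes G :: "('a \<Rightarrow> 'a) set" and \<Omega> :: "'a set"
  assumes "finite \<Omega>" and "card \<Omega> \<ge> 2"
    and "perm_group G \<Omega>" and "transitive_on G \<Omega>"
    and "msep G \<Omega> = (card \<Omega> + 2) div 2"
  shows "(even (card \<Omega>) \<longrightarrow>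
            rG G \<Omega> * card G = (\<Sum>A\<in>ksubsets \<Omega> (card \<Omega> div 2). card (setwise_stab G A))
          \<and> (\<Sum>A\<in>ksubsets \<Omega> (card \<Omega> div 2). card (setwise_stab G A))
              = (\<Sum>g\<in>O_set G \<Omega> 0. 2 ^ ncycles \<Omega> g))
       \<and> (odd (card \<Omega>) \<longrightarrow>
            rG G \<Omega> * card G = (\<Sum>A\<in>ksubsets \<Omega> (card \<Omega> div 2). card (setwise_stab G A))
          \<and> (\<Sum>A\<in>ksubsets \<Omega> (card \<Omega> div 2). card (setwise_stab G A))
              \<le> (\<Sum>g\<in>O_set G \<Omega> 1. 2 ^ (ncycles \<Omega> g - 1) * shortest_odd \<Omega> g)
          \<and> (\<Sum>g\<in>O_set G \<Omega> 1. 2 ^ (ncycles \<Omega> g - 1) * shortest_odd \<Omega> g)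
              \<le> ((card \<Omega> + 1) div 2) * (\<Sum>A\<in>ksubsets \<Omega> (card \<Omega> div 2). card (setwise_stab G A))
          \<and> ((card \<Omega> + 1) div 2) * (\<Sum>A\<in>ksubsets \<Omega> (card \<Omega> div 2). card (setwise_stab G A))
              = ((card \<Omega> + 1) div 2) * (rG G \<Omega> * card G))"
proof -
  note fin = assms(1) and pg = assms(3) and ms = assms(5)
  let ?n = "card \<Omega>"
  let ?k = "card \<Omega> div 2"
  let ?K = "ksubsets \<Omega> ?k"
  let ?S = "\<Sum>A\<in>?K. card (setwise_stab G A)"
  let ?P = "\<lambda>A. card {g \<in> G. A \<inter> g ` A = {}}"
  have Kfin: "finite ?K" unfolding ksubsets_def using fin by simp
  have Gfin: "finite G" by (rule G_finite[OF pg fin])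
  have part1: "rG G \<Omega> * card G = ?S" by (rule orbit_count[OF pg fin])
  have DC: "(\<Sum>A\<in>?K. ?P A) = (\<Sum>g\<in>G. card (Qset g \<Omega>))"
  proof -
    have "(\<Sum>A\<in>?K. ?P A) = (\<Sum>g\<in>G. card {A \<in> ?K. A \<inter> g ` A = {}})"
      by (rule double_count[OF Kfin Gfin])
    also have "\<dots> = (\<Sum>g\<in>G. card (Qset g \<Omega>))" by (simp only: Q_eq)
    finally show ?thesis .
  qed
  have lower: "?S \<le> (\<Sum>A\<in>?K. ?P A)"
    by (rule sum_mono) (rule P_lower[OF pg fin ms])
  have upper: "(\<Sum>A\<in>?K. ?P A) \<le> ((?n - ?k) choose ?k) * ?S"
  proof -
    have "(\<Sum>A\<in>?K. ?P A) \<le> (\<Sum>A\<in>?K. ((?n - ?k) choose ?k) * card (setwise_stab G A))"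
      by (rule sum_mono) (rule P_upper[OF pg fin ms])
    thus ?thesis by (simp add: sum_distrib_left)
  qed
  have perms: "\<And>g. g \<in> G \<Longrightarrow> g permutes \<Omega>" by (rule G_perm[OF pg fin])
  show ?thesis
  proof (intro conjI impI)
    assume ev: "even ?n"
    show "rG G \<Omega> * card G = ?S" by (rule part1)
    have "?n - ?k = ?k" using ev by presburger
    hence "(\<Sum>A\<in>?K. ?P A) = ?S" using lower upper by simp
    moreover have "(\<Sum>g\<in>O_set G \<Omega> 0. 2 ^ ncycles \<Omega> g) = (\<Sum>g\<in>G. card (Qset g \<Omega>))"
    proof (rule sum.mono_neutral_cong_left[OF Gfin])
      show "O_set G \<Omega> 0 \<subseteq> G" unfolding O_set_def by blast
      show "\<forall>i\<in>G - O_set G \<Omega> 0. card (Qset i \<Omega>) = 0"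
        using Q_even[OF perms fin ev] unfolding O_set_def by auto
      show "\<And>x. x \<in> O_set G \<Omega> 0 \<Longrightarrow> 2 ^ ncycles \<Omega> x = card (Qset x \<Omega>)"
        using Q_even[OF perms fin ev] unfolding O_set_def by auto
    qed
    ultimately show "?S = (\<Sum>g\<in>O_set G \<Omega> 0. 2 ^ ncycles \<Omega> g)" using DC by simp
  next
    assume od: "odd ?n"
    show "rG G \<Omega> * card G = ?S" by (rule part1)
    have ch: "((?n - ?k) choose ?k) = (?n + 1) div 2"
    proof -
      have "?n - ?k = Suc ?k" using od by presburger
      hence "((?n - ?k) choose ?k) = Suc ?k" by (simp only: binomial_Suc_n)
      also have "Suc ?k = (?n + 1) div 2" using od by presburger
      finally show ?thesis .
    qed
    have up2: "(\<Sum>A\<in>?K. ?P A) \<le> ((?n + 1) div 2) * ?S" using upper unfolding ch .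
    have eqO: "(\<Sum>g\<in>O_set G \<Omega> 1. 2 ^ (ncycles \<Omega> g - 1) * shortest_odd \<Omega> g) = (\<Sum>g\<in>G. card (Qset g \<Omega>))"
    proof (rule sum.mono_neutral_cong_left[OF Gfin])
      show "O_set G \<Omega> 1 \<subseteq> G" unfolding O_set_def by blast
      show "\<forall>i\<in>G - O_set G \<Omega> 1. card (Qset i \<Omega>) = 0"
        using Q_odd[OF perms fin od] unfolding O_set_def by auto
      show "\<And>x. x \<in> O_set G \<Omega> 1 \<Longrightarrow> 2 ^ (ncycles \<Omega> x - 1) * shortest_odd \<Omega> x = card (Qset x \<Omega>)"
        using Q_odd[OF perms fin od] unfolding O_set_def by auto
    qed
    show "?S \<le> (\<Sum>g\<in>O_set G \<Omega> 1. 2 ^ (ncycles \<Omega> g - 1) * shortest_odd \<Omega> g)"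
      using lower DC eqO by simp
    show "(\<Sum>g\<in>O_set G \<Omega> 1. 2 ^ (ncycles \<Omega> g - 1) * shortest_odd \<Omega> g) \<le> ((?n + 1) div 2) * ?S"
      using up2 DC eqO by simp
    show "((?n + 1) div 2) * ?S = ((?n + 1) div 2) * (rG G \<Omega> * card G)" using part1 by simp
  qed
qed

end
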